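(* Let $t\ge 2$ and $n_0=2^t-1$. There exists a spanning subgraph $H$ of $Q_{n_0}$ containing no subgraph isomorphic to $Q_2$, together with disjoint sets $C,D\subseteq\{0,1\}^{n_0}$, each of which is both an independent set and a dominating set of $H$, with $|C|=2^{n_0}/(n_0+1)$ and $|D|=3\cdot 2^{n_0}/(n_0+1)$, such that every edge of $H$ has at least one endpoint in $C\cup D$ and $e(H)\le 2^{n_0+1}$.
   Context: $Q_n$ is the hypercube on $\{0,1\}^n$ with edges between vertices differing in exactly one coordinate; $Q_2$ is the 4-cycle. A set $S$ is dominating in $H$ if every vertex of $H$ is in $S$ or adjacent in $H$ to a vertex of $S$; independent means no edge of $H$ has both endpoints in $S$. *)

theory Defs
  imports Main
begin

definition cube_vertices :: "nat \<Rightarrow> bool list set" where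
  "cube_vertices n = {xs. length xs = n}"

definition cube_adj :: "nat \<Rightarrow> bool list \<Rightarrow> bool list \<Rightarrow> bool" where
  "cube_adj n x y \<longleftrightarrow> x \<in> cube_vertices n \<and> y \<in> cube_vertices n \<and>
     card {i. i < n \<and> x ! i \<noteq> y ! i} = 1"

definition cube_edges :: "nat \<Rightarrow> bool list set set" where
  "cube_edges n = {{x, y} | x y. cube_adj n x y}"

text \<open>A spanning subgraph of Q_n is given by its edge set E (vertex set is all of Q_n).\<close>
definition spanning_subgraph :: "nat \<Rightarrow> bool list set set \<Rightarrow> bool" where
  "spanning_subgraph n E \<longleftrightarrow> E \<subseteq> cube_edges n"

definition Q2_free :: "bool list set set \<Rightarrow> bool" where
  "Q2_free E \<longleftrightarrow> \<not> (\<exists>a b c d. distinct [a, b, c, d] \<and>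
      {a, b} \<in> E \<and> {b, c} \<in> E \<and> {c, d} \<in> E \<and> {d, a} \<in> E)"

definition independent_in :: "bool list set set \<Rightarrow> bool list set \<Rightarrow> bool" where
  "independent_in E S \<longleftrightarrow> (\<forall>u\<in>S. \<forall>v\<in>S. {u, v} \<notin> E)"

definition dominating_in :: "bool list set \<Rightarrow> bool list set set \<Rightarrow> bool list set \<Rightarrow> bool" where
  "dominating_in V E S \<longleftrightarrow> S \<subseteq> V \<and> (\<forall>v\<in>V. v \<in> S \<or> (\<exists>u\<in>S. {u, v} \<in> E))"

end

theory Submission
  imports Defs
begin
lemma xl: "(a::nat) < 2^t \<Longrightarrow> b < 2^t \<Longrightarrow> xor a b < 2^t"
proof -
  assume a1: "a < 2 ^ t"
  assume "b < 2 ^ t"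
  then have "int (xor a b) < 2 ^ t"
    using a1 by (simp add: XOR_upper of_nat_xor_eq)
  then show ?thesis
    by simp
qed
lemma xc: "xor (a::nat) (xor a b) = b" by (simp add: xor.assoc[symmetric])
lemma x0: "xor (a::nat) b = 0 \<longleftrightarrow> a = b"
  by (metis xc xor_self_eq)
definition dd :: "nat \<Rightarrow> nat" where "dd p = (if bit p 0 = bit p 1 then 1 else 2)"
lemma dd_flip: "dd (xor p (dd p)) \<noteq> dd p"
  by (auto simp: dd_def bit_simps)
lemma dd12: "dd p = 1 \<or> dd p = 2" by (simp add: dd_def)

definition flip :: "nat \<Rightarrow> bool list \<Rightarrow> bool list" where
  "flip i x = x[i := \<not> x ! i]"

lemma flip_len[simp]: "length (flip i x) = length x" by (simp add: flip_def)
lemma flip_0[simp]: "flip 0 (b # xs) = (\<not> b) # xs" by (simp add: flip_def)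
lemma flip_Suc[simp]: "flip (Suc j) (b # xs) = b # flip j xs" by (simp add: flip_def)
lemma flip_flip: "flip i (flip i x) = x" by (cases "i < length x") (simp_all add: flip_def list_update_beyond)
lemma flip_nth: "i < length x \<Longrightarrow> flip i x ! j = (if j = i then \<not> x ! j else x ! j)"
  by (simp add: flip_def nth_list_update)

fun syn :: "bool list \<Rightarrow> nat \<Rightarrow> nat" where
  "syn [] k = 0"
| "syn (b # xs) k = xor (if b then k else 0) (syn xs (Suc k))"

lemma syn_flip: "i < length xs \<Longrightarrow> syn (flip i xs) k = xor (syn xs k) (i + k)"
proof (induction xs arbitrary: i k)
  case Nil then show ?case by simp
next
  case (Cons b xs)
  show ?case
  proof (cases i)
    case 0
    then show ?thesis
      by (cases b) (simp_all add: xor.commute xor.left_commute xor.assoc xc)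
  next
    case (Suc j)
    with Cons have "syn (flip j xs) (Suc k) = xor (syn xs (Suc k)) (j + Suc k)" by simp
    with Suc show ?thesis by (simp add: xor.assoc)
  qed
qed

lemma syn_bound: "(\<forall>i<length xs. i + k < 2^t) \<Longrightarrow> syn xs k < 2^t"
proof (induction xs arbitrary: k)
  case Nil then show ?case by simp
next
  case (Cons b xs)
  have k: "k < 2^t" using Cons.prems by auto
  have "syn xs (Suc k) < 2^t" using Cons.prems by (intro Cons.IH) auto
  with k show ?case by (auto intro: xl)
qed

definition s :: "bool list \<Rightarrow> nat" where "s x = syn x 1"
definition f :: "bool list \<Rightarrow> bool list" where "f x = flip (s x - 1) x"
definition kk :: "nat \<Rightarrow> nat" where "kk p = xor p (dd p)"
definition g :: "bool list \<Rightarrow> bool list" where "g x = flip (kk (s x) - 1) x"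

lemma flip2:
  assumes "i \<noteq> j" "k \<noteq> l" "i < length z" "j < length z" "k < length z" "l < length z"
    "flip i (flip j z) = flip k (flip l z)"
  shows "(i = k \<and> j = l) \<or> (i = l \<and> j = k)"
proof -
  have e: "\<And>m. flip i (flip j z) ! m = flip k (flip l z) ! m" using assms(7) by simp
  have "j = k \<or> j = l"
  proof (rule ccontr)
    assume c: "\<not> (j = k \<or> j = l)"
    have "flip i (flip j z) ! j = (\<not> z ! j)" using assms(1,3,4) by (simp add: flip_nth)
    moreover have "flip k (flip l z) ! j = z ! j" using assms(5,6) c by (simp add: flip_nth)
    ultimately show False using e[of j] by simp
  qed
  moreover have "i = k \<or> i = l"
  proof (rule ccontr)
    assume c: "\<not> (i = k \<or> i = l)"
    have "flip i (flip j z) ! i = (\<not> z ! i)" using assms(1,3,4) by (simp add: flip_nth)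
    moreover have "flip k (flip l z) ! i = z ! i" using assms(5,6) c by (simp add: flip_nth)
    ultimately show False using e[of i] by simp
  qed
  ultimately show ?thesis using assms(1) by blast
qed

locale hc =
  fixes t n :: nat
  assumes n_def: "n = 2^t - 1" and t2: "2 \<le> t"
begin

abbreviation "V \<equiv> cube_vertices n"

lemma N: "2^t = n + 1" using n_def by simp
lemma n3: "3 \<le> n"
proof -
  have "(2::nat)^2 \<le> 2^t" using t2 by (rule power_increasing) simp
  then show ?thesis using n_def by simp
qed

lemma inV: "x \<in> V \<longleftrightarrow> length x = n" by (simp add: cube_vertices_def)

lemma s_lt: "x \<in> V \<Longrightarrow> s x < 2^t"
  unfolding s_def by (rule syn_bound) (auto simp: inV N)

lemma s_le: "x \<in> V \<Longrightarrow> s x \<le> n" using s_lt N by fastforce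

lemma flipV: "x \<in> V \<Longrightarrow> flip i x \<in> V" by (simp add: inV)

lemma s_flip: "x \<in> V \<Longrightarrow> i < n \<Longrightarrow> s (flip i x) = xor (s x) (i + 1)"
  unfolding s_def by (rule syn_flip) (simp add: inV)

lemma fV: "x \<in> V \<Longrightarrow> f x \<in> V" by (simp add: f_def flipV)
lemma gV: "x \<in> V \<Longrightarrow> g x \<in> V" by (simp add: g_def flipV)

lemma s_f: "x \<in> V \<Longrightarrow> s x \<noteq> 0 \<Longrightarrow> s (f x) = 0"
proof -
  assume a: "x \<in> V" "s x \<noteq> 0"
  have "s x - 1 < n" using s_le[OF a(1)] a(2) by simp
  then show ?thesis using a by (simp add: f_def s_flip)
qed

lemma kk_facts: assumes "x \<in> V" "4 \<le> s x"
  shows "kk (s x) \<noteq> 0" "kk (s x) - 1 < n" "kk (s x) \<noteq> s x"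
proof -
  have d: "dd (s x) < 2^t" using dd12[of "s x"] n3 N by auto
  show "kk (s x) \<noteq> 0" using assms dd12[of "s x"] by (auto simp: kk_def x0)
  moreover have "kk (s x) < 2^t" unfolding kk_def by (rule xl[OF s_lt[OF assms(1)] d])
  ultimately show "kk (s x) - 1 < n" using N by simp
  have "dd (s x) = xor (s x) (kk (s x))" by (simp add: kk_def xc)
  then show "kk (s x) \<noteq> s x" using dd12[of "s x"] by auto
qed

lemma s_g: "x \<in> V \<Longrightarrow> 4 \<le> s x \<Longrightarrow> s (g x) = dd (s x)"
  using kk_facts[of x] by (simp add: g_def s_flip kk_def xc)

lemma edge_cube: assumes "x \<in> V" "i < n" shows "{x, flip i x} \<in> cube_edges n"
proof -
  have "{j. j < n \<and> x ! j \<noteq> flip i x ! j} = {i}"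
    using assms by (auto simp: flip_nth inV)
  then have "cube_adj n x (flip i x)" using assms by (simp add: cube_adj_def flipV)
  then show ?thesis unfolding cube_edges_def by blast
qed

definition EE :: "bool list set set" where
  "EE = (\<lambda>x. {x, f x}) ` {x\<in>V. s x \<noteq> 0} \<union> (\<lambda>x. {x, g x}) ` {x\<in>V. 4 \<le> s x}"

lemma edge_cases: assumes "{a, b} \<in> EE"
  shows "a \<in> V \<and> b \<in> V \<and> ((s a \<noteq> 0 \<and> b = f a) \<or> (s b \<noteq> 0 \<and> a = f b) \<or>
     (4 \<le> s a \<and> b = g a) \<or> (4 \<le> s b \<and> a = g b))"
  using assms unfolding EE_def by (auto simp: doubleton_eq_iff fV gV)

lemma edgeI1: "x \<in> V \<Longrightarrow> s x \<noteq> 0 \<Longrightarrow> {x, f x} \<in> EE" unfolding EE_def by blast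
lemma edgeI2: "x \<in> V \<Longrightarrow> 4 \<le> s x \<Longrightarrow> {x, g x} \<in> EE" unfolding EE_def by blast

lemma dd_ne0: "dd p \<noteq> 0" using dd12[of p] by auto
lemma dd_lt4: "dd p < 4" using dd12[of p] by auto

lemma L: assumes "4 \<le> s v" "{v, u} \<in> EE" shows "u = f v \<or> u = g v"
proof -
  from edge_cases[OF assms(2)] have uV: "u \<in> V" and
    c: "(s v \<noteq> 0 \<and> u = f v) \<or> (s u \<noteq> 0 \<and> v = f u) \<or> (4 \<le> s v \<and> u = g v) \<or> (4 \<le> s u \<and> v = g u)"
    by auto
  show ?thesis using c s_f[OF uV] s_g[OF uV] dd_lt4[of "s u"] assms(1) by auto
qed

lemma M: assumes "s u = 0" "{u, w} \<in> EE" shows "s w \<noteq> 0 \<and> u = f w"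
proof -
  from edge_cases[OF assms(2)] have wV: "w \<in> V" and
    c: "(s u \<noteq> 0 \<and> w = f u) \<or> (s w \<noteq> 0 \<and> u = f w) \<or> (4 \<le> s u \<and> w = g u) \<or> (4 \<le> s w \<and> u = g w)"
    by auto
  show ?thesis using c s_g[OF wV] dd_ne0[of "s w"] assms(1) by auto
qed

lemma Nn: assumes "s w \<noteq> 0" "s w < 4" "{w, x} \<in> EE" shows "x = f w \<or> (4 \<le> s x \<and> w = g x)"
proof -
  from edge_cases[OF assms(3)] have xV: "x \<in> V" and
    c: "(s w \<noteq> 0 \<and> x = f w) \<or> (s x \<noteq> 0 \<and> w = f x) \<or> (4 \<le> s w \<and> x = g w) \<or> (4 \<le> s x \<and> w = g x)"
    by auto
  show ?thesis using c s_f[OF xV] assms(1,2) by auto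
qed

lemma P: assumes "x \<in> V" "y \<in> V" "4 \<le> s x" "4 \<le> s y" "f x = f y" "g x = g y"
  shows "x = y"
proof (rule ccontr)
  assume ne: "x \<noteq> y"
  define z where "z = f x"
  have zV: "z \<in> V" using fV[OF assms(1)] z_def by simp
  have hx: "x = flip (s x - 1) z" unfolding z_def f_def by (simp add: flip_flip)
  have hy0: "y = flip (s y - 1) (f y)" by (simp add: f_def flip_flip)
  have hy: "y = flip (s y - 1) z" using hy0 assms(5) z_def by simp
  have sne: "s x \<noteq> s y" using ne hx hy by metis
  have gx: "g x = flip (kk (s x) - 1) (flip (s x - 1) z)" using hx g_def by metis
  have gy: "g y = flip (kk (s y) - 1) (flip (s y - 1) z)" using hy g_def by metis
  have lz: "length z = n" using zV inV by simp
  have kx: "kk (s x) \<noteq> 0" "kk (s x) - 1 < n" "kk (s x) \<noteq> s x" using kk_facts[OF assms(1,3)] by auto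
  have ky: "kk (s y) \<noteq> 0" "kk (s y) - 1 < n" "kk (s y) \<noteq> s y" using kk_facts[OF assms(2,4)] by auto
  have bx: "s x - 1 < n" using s_le[OF assms(1)] assms(3) by simp
  have by': "s y - 1 < n" using s_le[OF assms(2)] assms(4) by simp
  have "(kk (s x) - 1 = kk (s y) - 1 \<and> s x - 1 = s y - 1) \<or> (kk (s x) - 1 = s y - 1 \<and> s x - 1 = kk (s y) - 1)"
    apply (rule flip2[of _ _ _ _ z])
    using kx ky bx by' lz assms(3,4) gx gy assms(6) by auto
  then have h1: "kk (s x) = s y" and h2: "s x = kk (s y)" using sne kx ky assms(3,4) by auto
  have e1: "xor (s x) (s y) = dd (s x)" using xc[of "s x" "dd (s x)"] h1 unfolding kk_def by metis
  have e2: "xor (s y) (s x) = dd (s y)" using xc[of "s y" "dd (s y)"] h2 unfolding kk_def by metis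
  have "dd (s y) \<noteq> dd (s x)" using dd_flip[of "s x"] \<open>kk (s x) = s y\<close> by (simp add: kk_def)
  with e1 e2 show False by (simp add: xor.commute)
qed

lemma O4': assumes "distinct [a, b, c, d]" "{a, b} \<in> EE" "{b, c} \<in> EE" "{c, d} \<in> EE" "{d, a} \<in> EE"
  "4 \<le> s a" "b = f a" "d = g a"
  shows False
proof -
  have aV: "a \<in> V" using edge_cases[OF assms(2)] by simp
  have cV: "c \<in> V" using edge_cases[OF assms(4)] by simp
  have sb: "s b = 0" using s_f[OF aV] assms(6,7) by simp
  have c1: "s c \<noteq> 0 \<and> b = f c" using M[OF sb assms(3)] .
  have sd: "s d = dd (s a)" using s_g[OF aV assms(6)] assms(8) by simp
  have "{d, c} \<in> EE" using assms(4) by (simp add: insert_commute)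
  from Nn[OF _ _ this] sd dd_ne0 dd_lt4 have "c = f d \<or> (4 \<le> s c \<and> d = g c)" by metis
  moreover have "s (f d) = 0" using s_f edge_cases[OF assms(4)] sd dd_ne0 by metis
  ultimately have c2: "4 \<le> s c \<and> d = g c" using c1 by auto
  have "c = a" using P[OF cV aV] c1 c2 assms(6,7,8) by auto
  then show False using assms(1) by simp
qed

lemma O4: assumes "distinct [a, b, c, d]" "{a, b} \<in> EE" "{b, c} \<in> EE" "{c, d} \<in> EE" "{d, a} \<in> EE"
  "4 \<le> s a"
  shows False
proof -
  have b: "b = f a \<or> b = g a" using L[OF assms(6) assms(2)] .
  have d: "d = f a \<or> d = g a" using L[OF assms(6)] assms(5) by (simp add: insert_commute)
  have "b \<noteq> d" using assms(1) by simp
  then have "(b = f a \<and> d = g a) \<or> (b = g a \<and> d = f a)" using b d by auto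
  then show False
  proof
    assume "b = f a \<and> d = g a" then show False using O4'[OF assms] by blast
  next
    assume h: "b = g a \<and> d = f a"
    have "distinct [a, d, c, b]" using assms(1) by auto
    moreover have "{a, d} \<in> EE" "{d, c} \<in> EE" "{c, b} \<in> EE" "{b, a} \<in> EE"
      using assms(2-5) by (simp_all add: insert_commute)
    ultimately show False using O4' assms(6) h by blast
  qed
qed

lemma O0: assumes "distinct [a, b, c, d]" "{a, b} \<in> EE" "{b, c} \<in> EE" "{c, d} \<in> EE" "{d, a} \<in> EE"
  "s a < 4" "s b < 4" "s c < 4" "s d < 4"
  shows False
proof (cases "s a = 0")
  case True
  have "s b \<noteq> 0 \<and> a = f b" using M[OF True assms(2)] .
  moreover then have "c = f b" using Nn[OF _ assms(7) assms(3)] assms(8) by auto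
  ultimately show False using assms(1) by auto
next
  case False
  have "b = f a" using Nn[OF False assms(6) assms(2)] assms(7) by auto
  moreover have "d = f a"
  proof -
    have "{a, d} \<in> EE" using assms(5) by (simp add: insert_commute)
    from Nn[OF False assms(6) this] assms(9) show ?thesis by auto
  qed
  ultimately show False using assms(1) by auto
qed

lemma Q2: "Q2_free EE"
  unfolding Q2_free_def
proof clarify
  fix a b c d
  assume h: "distinct [a, b, c, d]" "{a, b} \<in> EE" "{b, c} \<in> EE" "{c, d} \<in> EE" "{d, a} \<in> EE"
  have "\<not> 4 \<le> s a" using O4 h by blast
  moreover have "\<not> 4 \<le> s b" using O4[of b c d a] h by (auto simp: insert_commute)
  moreover have "\<not> 4 \<le> s c" using O4[of c d a b] h by (auto simp: insert_commute)
  moreover have "\<not> 4 \<le> s d" using O4[of d a b c] h by (auto simp: insert_commute)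
  ultimately show False using O0[OF h] by simp
qed

lemma span: "spanning_subgraph n EE"
  unfolding spanning_subgraph_def
proof
  fix e assume "e \<in> EE"
  then obtain x where "x \<in> V" "(s x \<noteq> 0 \<and> e = {x, f x}) \<or> (4 \<le> s x \<and> e = {x, g x})"
    unfolding EE_def by blast
  then show "e \<in> cube_edges n"
  proof (elim disjE conjE)
    assume a: "x \<in> V" "s x \<noteq> 0" "e = {x, f x}"
    have "s x - 1 < n" using s_le[OF a(1)] a(2) by simp
    then show ?thesis using edge_cube[OF a(1)] a by (simp add: f_def)
  next
    assume a: "x \<in> V" "4 \<le> s x" "e = {x, g x}"
    then show ?thesis using edge_cube[OF a(1)] kk_facts[OF a(1,2)] by (simp add: g_def)
  qed
qed

definition F :: "nat \<Rightarrow> bool list set" where "F j = {x\<in>V. s x = j}"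

lemma finV: "finite V"
proof -
  have "V = {xs. set xs \<subseteq> (UNIV::bool set) \<and> length xs = n}" by (auto simp: cube_vertices_def)
  then show ?thesis using finite_lists_length_eq[of "UNIV::bool set" n] by simp
qed

lemma cardV: "card V = 2 ^ n"
proof -
  have "V = {xs. set xs \<subseteq> (UNIV::bool set) \<and> length xs = n}" by (auto simp: cube_vertices_def)
  then show ?thesis using card_lists_length_eq[of "UNIV::bool set" n] by simp
qed

lemma card_F: assumes "1 \<le> j" "j \<le> n" shows "card (F j) = card (F 0)"
proof -
  have j: "j - 1 < n" "j - 1 + 1 = j" using assms by auto
  have "bij_betw (flip (j - 1)) (F 0) (F j)"
    apply (rule bij_betw_byWitness[where f' = "flip (j - 1)"])
    using j by (auto simp: F_def flip_flip s_flip flipV)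
  then show ?thesis by (simp add: bij_betw_same_card)
qed

lemma card_V_F: "card V = (n + 1) * card (F 0)"
proof -
  have "V = (\<Union>j\<in>{..<n+1}. F j)" using s_le by (auto simp: F_def less_Suc_eq_le)
  then have "card V = card (\<Union>j\<in>{..<n+1}. F j)" by simp
  also have "\<dots> = (\<Sum>j\<in>{..<n+1}. card (F j))"
    by (rule card_UN_disjoint) (use finV in \<open>auto simp: F_def\<close>)
  also have "\<dots> = (\<Sum>j<n+1. card (F 0))"
    apply (rule sum.cong, simp)
    subgoal for j by (cases "j = 0") (auto intro: card_F)
    done
  finally show ?thesis by simp
qed

lemma card_D: "card (F 1 \<union> F 2 \<union> F 3) = 3 * card (F 0)"
proof -
  have fin: "finite (F j)" for j using finV by (simp add: F_def)
  have d1: "F 1 \<inter> F 2 = {}" "(F 1 \<union> F 2) \<inter> F 3 = {}" by (auto simp: F_def)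
  have "card (F 1 \<union> F 2 \<union> F 3) = card (F 1 \<union> F 2) + card (F 3)"
    using fin d1 by (simp add: card_Un_disjoint)
  also have "card (F 1 \<union> F 2) = card (F 1) + card (F 2)"
    using fin d1 by (simp add: card_Un_disjoint)
  finally have "card (F 1 \<union> F 2 \<union> F 3) = card (F 1) + card (F 2) + card (F 3)" .
  then show ?thesis using card_F n3 by simp
qed

lemma main: "\<exists>E C D.
     spanning_subgraph n E \<and> Q2_free E \<and>
     C \<subseteq> cube_vertices n \<and> D \<subseteq> cube_vertices n \<and> C \<inter> D = {} \<and>
     independent_in E C \<and> dominating_in (cube_vertices n) E C \<and>
     independent_in E D \<and> dominating_in (cube_vertices n) E D \<and>
     card C * (n + 1) = 2 ^ n \<and> card D * (n + 1) = 3 * 2 ^ n \<and>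
     (\<forall>e\<in>E. e \<inter> (C \<union> D) \<noteq> {}) \<and>
     card E \<le> 2 ^ (n + 1)"
proof (intro exI conjI)
  show "spanning_subgraph n EE" by (rule span)
  show "Q2_free EE" by (rule Q2)
  show "F 0 \<subseteq> V" by (auto simp: F_def)
  show "F 1 \<union> F 2 \<union> F 3 \<subseteq> V" by (auto simp: F_def)
  show "F 0 \<inter> (F 1 \<union> F 2 \<union> F 3) = {}" by (auto simp: F_def)
  show "independent_in EE (F 0)"
    unfolding independent_in_def
  proof (intro ballI)
    fix u v assume u: "u \<in> F 0" and v: "v \<in> F 0"
    show "{u, v} \<notin> EE"
    proof
      assume "{u, v} \<in> EE"
      from edge_cases[OF this] u v show False by (auto simp: F_def)
    qed
  qed
  show "dominating_in V EE (F 0)"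
    unfolding dominating_in_def
  proof (intro conjI ballI)
    show "F 0 \<subseteq> V" by (auto simp: F_def)
    fix v assume v: "v \<in> V"
    show "v \<in> F 0 \<or> (\<exists>u\<in>F 0. {u, v} \<in> EE)"
    proof (cases "s v = 0")
      case True then show ?thesis using v by (simp add: F_def)
    next
      case False
      then have "f v \<in> F 0" "{f v, v} \<in> EE"
        using v s_f fV edgeI1 by (auto simp: F_def insert_commute)
      then show ?thesis by blast
    qed
  qed
  show "independent_in EE (F 1 \<union> F 2 \<union> F 3)"
    unfolding independent_in_def F_def
  proof (intro ballI)
    fix u v assume u: "u \<in> {x \<in> V. s x = 1} \<union> {x \<in> V. s x = 2} \<union> {x \<in> V. s x = 3}"
      and v: "v \<in> {x \<in> V. s x = 1} \<union> {x \<in> V. s x = 2} \<union> {x \<in> V. s x = 3}"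
    show "{u, v} \<notin> EE"
    proof
      assume "{u, v} \<in> EE"
      from edge_cases[OF this] u v s_f show False by fastforce
    qed
  qed
  show "dominating_in V EE (F 1 \<union> F 2 \<union> F 3)"
    unfolding dominating_in_def
  proof (intro conjI ballI)
    show "F 1 \<union> F 2 \<union> F 3 \<subseteq> V" by (auto simp: F_def)
    fix v assume v: "v \<in> V"
    show "v \<in> F 1 \<union> F 2 \<union> F 3 \<or> (\<exists>u\<in>F 1 \<union> F 2 \<union> F 3. {u, v} \<in> EE)"
    proof (cases "s v = 0")
      case True
      have n0: "0 < n" using n3 by simp
      have sf: "s (flip 0 v) = 1" using s_flip[OF v n0] True by simp
      have "f (flip 0 v) = v" using sf by (simp add: f_def flip_flip)
      then have "{flip 0 v, v} \<in> EE" using edgeI1[OF flipV[OF v, of 0]] sf by simp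
      moreover have "flip 0 v \<in> F 1" using sf flipV[OF v] by (simp add: F_def)
      ultimately show ?thesis by blast
    next
      case False
      show ?thesis
      proof (cases "s v < 4")
        case True
        then have "v \<in> F 1 \<union> F 2 \<union> F 3" using False v by (auto simp: F_def)
        then show ?thesis by blast
      next
        case c: False
        then have "4 \<le> s v" by simp
        then have "{g v, v} \<in> EE" "g v \<in> F 1 \<union> F 2 \<union> F 3"
          using edgeI2[OF v] s_g[OF v] gV[OF v] dd12[of "s v"]
          by (auto simp: insert_commute F_def)
        then show ?thesis by blast
      qed
    qed
  qed
  show "card (F 0) * (n + 1) = 2 ^ n" using card_V_F cardV by simp
  show "card (F 1 \<union> F 2 \<union> F 3) * (n + 1) = 3 * 2 ^ n" using card_V_F cardV card_D by simp
  show "\<forall>e\<in>EE. e \<inter> (F 0 \<union> (F 1 \<union> F 2 \<union> F 3)) \<noteq> {}"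
  proof
    fix e assume "e \<in> EE"
    then obtain x where x: "x \<in> V" "(s x \<noteq> 0 \<and> e = {x, f x}) \<or> (4 \<le> s x \<and> e = {x, g x})"
      unfolding EE_def by blast
    then show "e \<inter> (F 0 \<union> (F 1 \<union> F 2 \<union> F 3)) \<noteq> {}"
    proof (elim disjE conjE)
      assume a: "s x \<noteq> 0" "e = {x, f x}"
      then have "f x \<in> F 0" using x(1) s_f fV by (simp add: F_def)
      then show ?thesis using a by blast
    next
      assume a: "4 \<le> s x" "e = {x, g x}"
      then have "g x \<in> F 1 \<union> F 2 \<union> F 3" using x(1) s_g gV dd12[of "s x"] by (auto simp: F_def)
      then show ?thesis using a by blast
    qed
  qed
  show "card EE \<le> 2 ^ (n + 1)"
  proof -
    have "card EE \<le> card ((\<lambda>x. {x, f x}) ` {x\<in>V. s x \<noteq> 0}) + card ((\<lambda>x. {x, g x}) ` {x\<in>V. 4 \<le> s x})"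
      unfolding EE_def by (rule card_Un_le)
    also have "\<dots> \<le> card {x\<in>V. s x \<noteq> 0} + card {x\<in>V. 4 \<le> s x}"
      by (intro add_mono card_image_le) (simp_all add: finV)
    also have "\<dots> \<le> card V + card V"
      by (intro add_mono card_mono finV) auto
    finally show ?thesis using cardV by simp
  qed
qed

end

theorem mainTheorem10:
  fixes t n0 :: nat
  assumes "t \<ge> 2" and "n0 = 2 ^ t - 1"
  shows "\<exists>E C D.
     spanning_subgraph n0 E \<and> Q2_free E \<and>
     C \<subseteq> cube_vertices n0 \<and> D \<subseteq> cube_vertices n0 \<and> C \<inter> D = {} \<and>
     independent_in E C \<and> dominating_in (cube_vertices n0) E C \<and>
     independent_in E D \<and> dominating_in (cube_vertices n0) E D \<and>
     card C * (n0 + 1) = 2 ^ n0 \<and> card D * (n0 + 1) = 3 * 2 ^ n0 \<and>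
     (\<forall>e\<in>E. e \<inter> (C \<union> D) \<noteq> {}) \<and>
     card E \<le> 2 ^ (n0 + 1)"
proof -
  interpret hc t n0 using assms by unfold_locales auto
  show ?thesis by (rule main)
qed

end
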